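(* Every non-strictly slope-disjoint straight-line drawing of a rooted tree is monotone and planar.
   Context: All tree edges are directed away from the root; $T_u$ is the subtree rooted at $u$. The slope of a directed edge $(u,v)$ is the angle (mod $2\pi$) of the counter-clockwise rotation taking the horizontal half-line from $u$ towards increasing $x$ onto the half-line from $u$ through $v$. A drawing is non-strictly slope-disjoint if to every vertex $u$ one can assign angles $0\le a_1(u)<a_2(u)\le\pi$ such that: (1) every edge $e$ of $T_u$ and the edge entering $u$ from its parent satisfies $a_1(u)<slope(e)<a_2(u)$; (2) for every vertex $u$ and child $v$: $a_1(u)\le a_1(v)<a_2(v)\le a_2(u)$; (3) for two distinct children $v_1,v_2$ of the same vertex: either $a_1(v_1)<a_2(v_1)\le a_1(v_2)<a_2(v_2)$ or $a_1(v_2)<a_2(v_2)\le a_1(v_1)<a_2(v_1)$. A path $p_0,\dots,p_k$ in a straight-line drawing is monotone if there is a line $\ell$ such that the orthogonal projections of $p_0,\dots,p_k$ onto $\ell$ appear along $\ell$ in this order. A straight-line drawing of a graph is monotone if every pair of vertices is connected by a monotone path; it is planar if no two edges cross. *)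

theory Defs
  imports "HOL-Analysis.Analysis"
begin

definition rooted_tree :: "'v set \<Rightarrow> ('v \<times> 'v) set \<Rightarrow> 'v \<Rightarrow> bool" where
  "rooted_tree V E r \<longleftrightarrow> finite V \<and> r \<in> V \<and> E \<subseteq> V \<times> V \<and>
     (\<forall>u. (u, r) \<notin> E) \<and> (\<forall>v\<in>V - {r}. \<exists>!u. (u, v) \<in> E) \<and>
     (\<forall>v\<in>V. (r, v) \<in> E\<^sup>*)"

definition straight_line_drawing :: "'v set \<Rightarrow> ('v \<Rightarrow> complex) \<Rightarrow> bool" where
  "straight_line_drawing V p \<longleftrightarrow> inj_on p V"

definition slope :: "complex \<Rightarrow> complex \<Rightarrow> real" where
  "slope a b = (THE \<theta>. 0 \<le> \<theta> \<and> \<theta> < 2 * pi \<and> b - a = complex_of_real (cmod (b - a)) * cis \<theta>)"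

definition nonstrictly_slope_disjoint ::
    "'v set \<Rightarrow> ('v \<times> 'v) set \<Rightarrow> 'v \<Rightarrow> ('v \<Rightarrow> complex) \<Rightarrow> bool" where
  "nonstrictly_slope_disjoint V E r p \<longleftrightarrow>
     (\<exists>a1 a2 :: 'v \<Rightarrow> real.
        (\<forall>u\<in>V. 0 \<le> a1 u \<and> a1 u < a2 u \<and> a2 u \<le> pi) \<and>
        (\<forall>u\<in>V. \<forall>x y. (x, y) \<in> E \<and> ((u, x) \<in> E\<^sup>* \<or> y = u) \<longrightarrow>
              a1 u < slope (p x) (p y) \<and> slope (p x) (p y) < a2 u) \<and>
        (\<forall>u v. (u, v) \<in> E \<longrightarrow> a1 u \<le> a1 v \<and> a1 v < a2 v \<and> a2 v \<le> a2 u) \<and>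
        (\<forall>u v1 v2. (u, v1) \<in> E \<and> (u, v2) \<in> E \<and> v1 \<noteq> v2 \<longrightarrow>
              (a1 v1 < a2 v1 \<and> a2 v1 \<le> a1 v2 \<and> a1 v2 < a2 v2) \<or>
              (a1 v2 < a2 v2 \<and> a2 v2 \<le> a1 v1 \<and> a1 v1 < a2 v1)))"

definition is_path :: "('v \<times> 'v) set \<Rightarrow> 'v list \<Rightarrow> 'v \<Rightarrow> 'v \<Rightarrow> bool" where
  "is_path E ps x y \<longleftrightarrow> ps \<noteq> [] \<and> hd ps = x \<and> last ps = y \<and>
     (\<forall>i. Suc i < length ps \<longrightarrow> (ps ! i, ps ! Suc i) \<in> E \<or> (ps ! Suc i, ps ! i) \<in> E)"

definition monotone_path :: "('v \<Rightarrow> complex) \<Rightarrow> 'v list \<Rightarrow> bool" where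
  "monotone_path p ps \<longleftrightarrow> (\<exists>d::complex. d \<noteq> 0 \<and>
     (\<forall>i. Suc i < length ps \<longrightarrow> p (ps ! i) \<bullet> d < p (ps ! Suc i) \<bullet> d))"

definition monotone_drawing :: "'v set \<Rightarrow> ('v \<times> 'v) set \<Rightarrow> ('v \<Rightarrow> complex) \<Rightarrow> bool" where
  "monotone_drawing V E p \<longleftrightarrow>
     (\<forall>x\<in>V. \<forall>y\<in>V. \<exists>ps. is_path E ps x y \<and> monotone_path p ps)"

definition planar_drawing :: "('v \<times> 'v) set \<Rightarrow> ('v \<Rightarrow> complex) \<Rightarrow> bool" where
  "planar_drawing E p \<longleftrightarrow>
     (\<forall>a b c d. (a, b) \<in> E \<and> (c, d) \<in> E \<and> (a, b) \<noteq> (c, d) \<longrightarrow>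
        closed_segment (p a) (p b) \<inter> closed_segment (p c) (p d) \<subseteq> {p a, p b} \<inter> {p c, p d})"

end

theory Submission
  imports Defs
begin


lemma cis_shift: "cis (x + 2*pi) = cis x" "cis (x - 2*pi) = cis x"
  by (simp_all add: complex_eq_iff cos_diff sin_diff)

lemma slope_prop:
  assumes "a \<noteq> b"
  shows "0 \<le> slope a b \<and> slope a b < 2*pi \<and> b - a = complex_of_real (cmod (b-a)) * cis (slope a b)"
proof -
  define z where "z = b - a"
  have z0: "z \<noteq> 0" using assms z_def by auto
  define t where "t = (if 0 \<le> Arg z then Arg z else Arg z + 2*pi)"
  have A: "-pi < Arg z" "Arg z \<le> pi" using Arg_bounded by auto
  have E: "z = complex_of_real (cmod z) * cis (Arg z)"
    using Arg_eq[OF z0] by (simp add: cis_conv_exp)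
  have P: "0 \<le> t \<and> t < 2*pi \<and> z = complex_of_real (cmod z) * cis t"
  proof (cases "0 \<le> Arg z")
    case True
    moreover have "Arg z < 2*pi" using A pi_gt_zero by linarith
    moreover have "t = Arg z" using True unfolding t_def by simp
    ultimately show ?thesis using E by metis
  next
    case False
    hence "t = Arg z + 2*pi" by (simp add: t_def)
    moreover have "0 \<le> t" "t < 2*pi" using A False \<open>t = Arg z + 2*pi\<close> by linarith+
    ultimately show ?thesis using E cis_shift(1)[of "Arg z"] by metis
  qed
  have U: "th = t" if h: "0 \<le> th \<and> th < 2*pi \<and> z = complex_of_real (cmod z) * cis th" for th
  proof -
    define s where "s = (if th \<le> pi then th else th - 2*pi)"
    have "cis s = cis th" using cis_shift(2)[of th] by (simp add: s_def)
    hence "complex_of_real (cmod z) * exp (\<i> * complex_of_real s) = z"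
      using h cis_conv_exp[of s] by metis
    moreover have "0 < cmod z" using z0 by simp
    moreover have "-pi < s" "s \<le> pi" using h pi_gt_zero unfolding s_def by auto
    ultimately have "Arg z = s" by (intro Arg_unique) auto
    thus ?thesis using h unfolding s_def t_def by (smt (verit))
  qed
  define Q where "Q = (\<lambda>th. 0 \<le> th \<and> th < 2*pi \<and> z = complex_of_real (cmod z) * cis th)"
  have QT: "Q t" using P unfolding Q_def by blast
  have QU: "\<And>th. Q th \<Longrightarrow> th = t" using U unfolding Q_def by blast
  have "slope a b = (THE th. Q th)" unfolding slope_def z_def Q_def by simp
  also have "\<dots> = t" using QT QU by (rule the_equality)
  finally have "slope a b = t" .
  thus ?thesis using P unfolding z_def by simp
qed



definition nv :: "real \<Rightarrow> complex" where "nv g = Complex (- sin g) (cos g)"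

definition K :: "real \<Rightarrow> real \<Rightarrow> complex set" where
  "K al be = {z. 0 < Im z \<and> 0 < z \<bullet> nv al \<and> z \<bullet> nv be < 0}"

lemma nv_nz: "nv g \<noteq> 0"
proof
  assume "nv g = 0"
  hence "sin g = 0" "cos g = 0" by (auto simp: nv_def complex_eq_iff)
  thus False using sin_cos_squared_add[of g] by simp
qed

lemma inner_cis_nv: "(complex_of_real rho * cis ph) \<bullet> nv g = rho * sin (ph - g)"
  by (simp add: inner_complex_def nv_def sin_diff algebra_simps)

lemma sin_neg_lt: "-pi < x \<Longrightarrow> x < 0 \<Longrightarrow> sin x < 0"
  using sin_gt_zero[of "-x"] by simp

lemma sin_neg_le: "-pi \<le> x \<Longrightarrow> x \<le> 0 \<Longrightarrow> sin x \<le> 0"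
  using sin_ge_zero[of "-x"] by simp

lemma K_add: "u \<in> K al be \<Longrightarrow> v \<in> K al be \<Longrightarrow> u + v \<in> K al be"
  by (auto simp: K_def inner_add_left)

lemma K_scale: "0 < t \<Longrightarrow> u \<in> K al be \<Longrightarrow> t *\<^sub>R u \<in> K al be"
  by (auto simp: K_def inner_scaleR_left mult_pos_neg)

lemma K_zero: "0 \<notin> K al be"
  by (auto simp: K_def)

lemma K_neg: "u \<in> K al be \<Longrightarrow> - u \<notin> K al' be'"
  by (auto simp: K_def)

lemma K_add0: "u \<in> K al be \<or> u = 0 \<Longrightarrow> v \<in> K al be \<Longrightarrow> u + v \<in> K al be"
  using K_add by auto

lemma K_comb:
  assumes "u \<in> K al be \<or> u = 0" "v \<in> K al be" "0 \<le> t" "t \<le> 1"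
    and "(1 - t) *\<^sub>R u + t *\<^sub>R v = 0"
  shows "t = 0 \<and> u = 0"
proof (cases "t = 0")
  case False
  hence "t *\<^sub>R v \<in> K al be" using assms K_scale by auto
  moreover have "(1 - t) *\<^sub>R u \<in> K al be \<or> (1 - t) *\<^sub>R u = 0"
    using assms K_scale[of "1 - t" u al be] by (cases "t = 1") auto
  ultimately have "(1 - t) *\<^sub>R u + t *\<^sub>R v \<in> K al be" using K_add by (metis add_0)
  thus ?thesis using assms K_zero by metis
qed (use assms in auto)

lemma edge_in_K:
  assumes "0 < rho" "al < ph" "ph < be" "0 \<le> al" "be \<le> pi"
  shows "complex_of_real rho * cis ph \<in> K al be"
proof -
  have "0 < sin ph" using assms by (intro sin_gt_zero) auto
  moreover have "0 < sin (ph - al)" using assms by (intro sin_gt_zero) auto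
  moreover have "sin (ph - be) < 0" using assms by (intro sin_neg_lt) auto
  ultimately show ?thesis using assms
    by (simp add: K_def inner_cis_nv mult_pos_neg)
qed

lemma K_disj:
  assumes "u \<in> K al1 be1" "u \<in> K al2 be2" "be1 \<le> al2" "0 \<le> be1" "al2 \<le> pi"
  shows False
proof -
  have u0: "u \<noteq> 0" using assms K_zero by metis
  define ph where "ph = slope 0 u"
  have S: "0 \<le> ph" "ph < 2*pi" "u = complex_of_real (cmod u) * cis ph"
    using slope_prop[of 0 u] u0 unfolding ph_def by auto
  have c: "0 < cmod u" using u0 by simp
  have "Im u = cmod u * sin ph" proof -
    have "Im (complex_of_real (cmod u) * cis ph) = cmod u * sin ph" by simp
    thus ?thesis using S(3) by metis
  qed
  hence "0 < sin ph" using assms(1) c by (simp add: K_def zero_less_mult_iff)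
  hence p1: "ph < pi" using sin_le_zero[of ph] S by linarith
  have "u \<bullet> nv be1 = cmod u * sin (ph - be1)" using S(3) inner_cis_nv by metis
  hence "sin (ph - be1) < 0" using assms(1) c by (simp add: K_def mult_less_0_iff)
  hence p2: "ph < be1" using sin_ge_zero[of "ph - be1"] p1 assms by linarith
  have "u \<bullet> nv al2 = cmod u * sin (ph - al2)" using S(3) inner_cis_nv by metis
  hence "0 < sin (ph - al2)" using assms(2) c by (simp add: K_def zero_less_mult_iff)
  hence "al2 < ph" using sin_neg_le[of "ph - al2"] S assms by linarith
  thus False using p2 assms by linarith
qed



definition cone_ok :: "complex set \<Rightarrow> bool" where
  "cone_ok S \<longleftrightarrow> (\<forall>x\<in>S. \<forall>y\<in>S. x + y \<in> S) \<and> (\<forall>t>0. \<forall>x\<in>S. t *\<^sub>R x \<in> S) \<and> 0 \<notin> S"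

lemma cone_K: "cone_ok (K al be)"
  unfolding cone_ok_def using K_add K_scale K_zero by blast

lemma cone_negK: "cone_ok (uminus ` K al be)"
  unfolding cone_ok_def
proof (intro conjI ballI allI impI)
  fix x y assume "x \<in> uminus ` K al be" "y \<in> uminus ` K al be"
  then obtain x' y' where "x' \<in> K al be" "y' \<in> K al be" "x = - x'" "y = - y'" by auto
  thus "x + y \<in> uminus ` K al be" using K_add[of x' al be y']
    by (metis image_eqI minus_add_distrib)
next
  fix t :: real and x assume "0 < t" "x \<in> uminus ` K al be"
  then obtain x' where "x' \<in> K al be" "x = - x'" by auto
  thus "t *\<^sub>R x \<in> uminus ` K al be" using K_scale[OF \<open>0<t\<close>, of x' al be]
    by (metis image_eqI scaleR_minus_right)
next
  show "0 \<notin> uminus ` K al be" using K_zero by auto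
qed

lemma cone_comb:
  assumes "cone_ok S" "u \<in> S \<or> u = 0" "v \<in> S" "0 \<le> t" "t \<le> 1"
  shows "(1 - t) *\<^sub>R u + t *\<^sub>R v \<in> S \<or> (t = 0 \<and> u = 0)"
proof (cases "t = 0")
  case True thus ?thesis using assms by auto
next
  case False
  hence tv: "t *\<^sub>R v \<in> S" using assms unfolding cone_ok_def by auto
  show ?thesis
  proof (cases "u = 0 \<or> t = 1")
    case True thus ?thesis using tv by auto
  next
    case F: False
    hence "(1 - t) *\<^sub>R u \<in> S" using assms unfolding cone_ok_def by auto
    thus ?thesis using tv assms unfolding cone_ok_def by auto
  qed
qed

lemma seg_shift:
  assumes "q \<in> closed_segment A B"
  shows "\<exists>s. 0 \<le> s \<and> s \<le> 1 \<and> q - Oo = (1 - s) *\<^sub>R (A - Oo) + s *\<^sub>R (B - Oo)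
             \<and> q = (1 - s) *\<^sub>R A + s *\<^sub>R B"
proof -
  obtain s where s: "0 \<le> s" "s \<le> 1" "q = (1 - s) *\<^sub>R A + s *\<^sub>R B"
    using assms unfolding closed_segment_def by auto
  have "q - Oo = (1 - s) *\<^sub>R (A - Oo) + s *\<^sub>R (B - Oo)"
    using s(3) by (simp add: algebra_simps)
  thus ?thesis using s by blast
qed

lemma geo_main:
  assumes "cone_ok S1" "cone_ok S2" "S1 \<inter> S2 = {}"
    and "A - Oo \<in> S1 \<or> A - Oo = 0" "B - Oo \<in> S1"
    and "C - Oo \<in> S2 \<or> C - Oo = 0" "D - Oo \<in> S2"
    and "q \<in> closed_segment A B" "q \<in> closed_segment C D"
  shows "q = A \<and> q = C"
proof -
  obtain s where s: "0 \<le> s" "s \<le> 1" "q - Oo = (1 - s) *\<^sub>R (A - Oo) + s *\<^sub>R (B - Oo)"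
      "q = (1 - s) *\<^sub>R A + s *\<^sub>R B"
    using seg_shift[OF assms(8), of Oo] by blast
  obtain t where t: "0 \<le> t" "t \<le> 1" "q - Oo = (1 - t) *\<^sub>R (C - Oo) + t *\<^sub>R (D - Oo)"
      "q = (1 - t) *\<^sub>R C + t *\<^sub>R D"
    using seg_shift[OF assms(9), of Oo] by blast
  have 1: "q - Oo \<in> S1 \<or> (s = 0 \<and> A - Oo = 0)"
    using cone_comb[OF assms(1) assms(4) assms(5) s(1,2)] s(3) by simp
  have 2: "q - Oo \<in> S2 \<or> (t = 0 \<and> C - Oo = 0)"
    using cone_comb[OF assms(2) assms(6) assms(7) t(1,2)] t(3) by simp
  have "s = 0 \<and> A - Oo = 0"
  proof (rule ccontr)
    assume n: "\<not> (s = 0 \<and> A - Oo = 0)"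
    hence "q - Oo \<in> S1" using 1 by blast
    hence "q - Oo \<noteq> 0" using assms(1) unfolding cone_ok_def by auto
    hence "q - Oo \<in> S2" using 2 t(3) by auto
    thus False using \<open>q - Oo \<in> S1\<close> assms(3) by blast
  qed
  hence "q - Oo = 0" using s(3) by simp
  hence "t = 0 \<and> C - Oo = 0" using 2 assms(2) unfolding cone_ok_def by auto
  thus ?thesis using \<open>s = 0 \<and> A - Oo = 0\<close> s(4) t(4) by simp
qed

lemma K_negK_disj: "K al be \<inter> uminus ` K al' be' = {}"
  using K_neg by (auto simp: K_def)

lemma common_prefix:
  "P \<noteq> [] \<Longrightarrow> Q \<noteq> [] \<Longrightarrow> hd P = hd Q \<Longrightarrow>
   \<exists>c P' Q'. c \<noteq> [] \<and> P = c @ P' \<and> Q = c @ Q' \<and> (P' = [] \<or> Q' = [] \<or> hd P' \<noteq> hd Q')"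
proof (induction P arbitrary: Q)
  case Nil thus ?case by simp
next
  case (Cons x P)
  then obtain Q0 where Q: "Q = x # Q0" by (cases Q) auto
  show ?case
  proof (cases "P = [] \<or> Q0 = [] \<or> hd P \<noteq> hd Q0")
    case True thus ?thesis using Q by (intro exI[of _ "[x]"] exI[of _ P] exI[of _ Q0]) auto
  next
    case False
    then obtain c P' Q' where "c \<noteq> []" "P = c @ P'" "Q0 = c @ Q'"
        "P' = [] \<or> Q' = [] \<or> hd P' \<noteq> hd Q'"
      using Cons.IH[of Q0] by auto
    thus ?thesis using Q by (intro exI[of _ "x # c"] exI[of _ P'] exI[of _ Q']) auto
  qed
qed



definition ep :: "('v \<times> 'v) set \<Rightarrow> 'v \<Rightarrow> 'v \<Rightarrow> bool" where
  "ep E a b \<longleftrightarrow> (a, b) \<in> E"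

lemma reach_path:
  assumes "(u, v) \<in> E\<^sup>*"
  shows "\<exists>L. L \<noteq> [] \<and> hd L = u \<and> last L = v \<and> successively (ep E) L"
  using assms
proof (induction rule: rtrancl_induct)
  case base thus ?case by (intro exI[of _ "[u]"]) auto
next
  case (step y z)
  then obtain L where L: "L \<noteq> []" "hd L = u" "last L = y" "successively (ep E) L" by blast
  thus ?case using step(2)
    by (intro exI[of _ "L @ [z]"]) (auto simp: successively_append_iff ep_def)
qed

lemma path_reach:
  "successively (ep E) L \<Longrightarrow> L \<noteq> [] \<Longrightarrow> x \<in> set L \<Longrightarrow> (hd L, x) \<in> E\<^sup>*"
proof (induction L)
  case Nil thus ?case by simp
next
  case (Cons a L)
  show ?case
  proof (cases "x = a")
    case True thus ?thesis by simp
  next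
    case False
    hence "L \<noteq> []" "x \<in> set L" using Cons by auto
    moreover have "successively (ep E) L" "(a, hd L) \<in> E"
      using Cons.prems \<open>L \<noteq> []\<close> by (auto simp: successively_Cons ep_def)
    ultimately show ?thesis using Cons.IH by auto
  qed
qed

lemma path_reach_last:
  "successively (ep E) L \<Longrightarrow> L \<noteq> [] \<Longrightarrow> x \<in> set L \<Longrightarrow> (x, last L) \<in> E\<^sup>*"
proof (induction L arbitrary: x)
  case Nil thus ?case by simp
next
  case (Cons a L)
  show ?case
  proof (cases "L = []")
    case True thus ?thesis using Cons by simp
  next
    case False
    have s: "successively (ep E) L" "(a, hd L) \<in> E"
      using Cons.prems False by (auto simp: successively_Cons ep_def)
    show ?thesis
    proof (cases "x = a")
      case True
      have "(hd L, last L) \<in> E\<^sup>*" using Cons.IH[of "hd L"] s False by simp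
      thus ?thesis using True s False by auto
    next
      case F: False
      thus ?thesis using Cons s False by auto
    qed
  qed
qed

definition Rel :: "('v \<times> 'v) set \<Rightarrow> 'v \<Rightarrow> 'v \<Rightarrow> 'v \<Rightarrow> bool" where
  "Rel E c a b \<longleftrightarrow> (a, b) \<in> E \<and> ((c, a) \<in> E\<^sup>* \<or> b = c)"

lemma rel_path_aux:
  "successively (ep E) (v # L) \<Longrightarrow> (c, v) \<in> E\<^sup>* \<Longrightarrow> successively (Rel E c) (v # L)"
proof (induction L arbitrary: v)
  case Nil thus ?case by simp
next
  case (Cons a L)
  hence "(v, a) \<in> E" "successively (ep E) (a # L)" by (auto simp: ep_def)
  moreover hence "(c, a) \<in> E\<^sup>*" using Cons.prems by auto
  ultimately show ?case using Cons.IH Cons.prems by (auto simp: Rel_def)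
qed

lemma rel_path:
  assumes "successively (ep E) (w # L)" "L \<noteq> []"
  shows "successively (Rel E (hd L)) (w # L)"
proof -
  obtain c L' where L: "L = c # L'" using assms by (cases L) auto
  have "successively (Rel E c) (c # L')"
    using assms L by (intro rel_path_aux) auto
  moreover have "(w, c) \<in> E" using assms L by (auto simp: ep_def)
  ultimately show ?thesis using L by (auto simp: Rel_def)
qed



lemma join_rev:
  assumes "successively (\<lambda>a b. R b a) (w # P)" "successively R (w # Q)"
  shows "successively R (rev (w # P) @ Q)"
proof -
  have "successively R (rev (w # P))" unfolding successively_rev by (rule assms(1))
  moreover have "Q = [] \<or> R w (hd Q)" "successively R Q"
    using assms(2) by (auto simp: successively_Cons)
  moreover have "last (rev (w # P)) = w" by simp
  ultimately show ?thesis using successively_append_iff[of R "rev (w # P)" Q] by metis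
qed

locale T =
  fixes V :: "'v set" and E :: "('v \<times> 'v) set" and r :: 'v and p :: "'v \<Rightarrow> complex"
    and a1 a2 :: "'v \<Rightarrow> real"
  assumes tree: "rooted_tree V E r" and inj: "inj_on p V"
    and A0: "\<forall>u\<in>V. 0 \<le> a1 u \<and> a1 u < a2 u \<and> a2 u \<le> pi"
    and A1: "\<forall>u\<in>V. \<forall>x y. (x, y) \<in> E \<and> ((u, x) \<in> E\<^sup>* \<or> y = u) \<longrightarrow>
              a1 u < slope (p x) (p y) \<and> slope (p x) (p y) < a2 u"
    and A3: "\<forall>u v1 v2. (u, v1) \<in> E \<and> (u, v2) \<in> E \<and> v1 \<noteq> v2 \<longrightarrow>
              (a1 v1 < a2 v1 \<and> a2 v1 \<le> a1 v2 \<and> a1 v2 < a2 v2) \<or>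
              (a1 v2 < a2 v2 \<and> a2 v2 \<le> a1 v1 \<and> a1 v1 < a2 v1)"
begin

lemma EV: "(x, y) \<in> E \<Longrightarrow> x \<in> V \<and> y \<in> V"
  using tree unfolding rooted_tree_def by auto

lemma no_root: "(x, r) \<notin> E"
  using tree unfolding rooted_tree_def by auto

lemma reach: "v \<in> V \<Longrightarrow> (r, v) \<in> E\<^sup>*"
  using tree unfolding rooted_tree_def by auto

lemma uniq_parent: "(a, b) \<in> E \<Longrightarrow> (c, b) \<in> E \<Longrightarrow> a = c"
proof -
  assume h: "(a, b) \<in> E" "(c, b) \<in> E"
  hence "b \<in> V - {r}" using EV no_root by blast
  hence "\<exists>!u. (u, b) \<in> E" using tree unfolding rooted_tree_def by auto
  thus ?thesis using h by blast
qed

lemma noloop: "(x, x) \<notin> E"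
proof
  assume xx: "(x, x) \<in> E"
  have "\<forall>v. (r, v) \<in> E\<^sup>* \<longrightarrow> v \<noteq> x"
  proof (intro allI impI)
    fix v assume "(r, v) \<in> E\<^sup>*"
    thus "v \<noteq> x"
    proof (induction rule: rtrancl_induct)
      case base thus ?case using xx no_root by blast
    next
      case (step y z)
      show ?case
      proof
        assume "z = x"
        hence "y = x" using uniq_parent step(2) xx by blast
        thus False using step(3) by blast
      qed
    qed
  qed
  moreover have "(r, x) \<in> E\<^sup>*" using reach EV xx by blast
  ultimately show False by blast
qed

lemma pne: "(x, y) \<in> E \<Longrightarrow> p x \<noteq> p y"
  using inj EV noloop unfolding inj_on_def by metis

lemma edge_rep: "(x, y) \<in> E \<Longrightarrow>
   p y - p x = complex_of_real (cmod (p y - p x)) * cis (slope (p x) (p y)) \<and> 0 < cmod (p y - p x)"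
proof -
  assume e: "(x, y) \<in> E"
  have ne: "p x \<noteq> p y" by (rule pne[OF e])
  hence "0 < cmod (p y - p x)" by simp
  thus ?thesis using slope_prop[OF ne] by blast
qed

lemma edge_slope: "Rel E c x y \<Longrightarrow> c \<in> V \<Longrightarrow>
    a1 c < slope (p x) (p y) \<and> slope (p x) (p y) < a2 c"
  using A1 unfolding Rel_def by blast

lemma edge_K: "Rel E c x y \<Longrightarrow> c \<in> V \<Longrightarrow> p y - p x \<in> K (a1 c) (a2 c)"
proof -
  assume h: "Rel E c x y" "c \<in> V"
  hence e: "(x, y) \<in> E" unfolding Rel_def by blast
  have "complex_of_real (cmod (p y - p x)) * cis (slope (p x) (p y)) \<in> K (a1 c) (a2 c)"
    using edge_slope[OF h] edge_rep[OF e] A0 h(2) by (intro edge_in_K) auto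
  thus ?thesis using edge_rep[OF e] by metis
qed

lemma desc_K:
  assumes cV: "c \<in> V" and cv: "(c, v) \<in> E\<^sup>+"
  shows "p v - p c \<in> K (a1 c) (a2 c)"
  using cv
  proof (induction rule: trancl_induct)
    case (base y)
    thus ?case using edge_K[of c c y] cV by (auto simp: Rel_def)
  next
    case (step y z)
    have "Rel E c y z" using step(1,2) by (auto simp: Rel_def)
    hence "p z - p y \<in> K (a1 c) (a2 c)" using edge_K cV by blast
    hence "(p z - p y) + (p y - p c) \<in> K (a1 c) (a2 c)" using K_add step(3) cV by blast
    thus ?case by simp
  qed

lemma desc_K0: "c \<in> V \<Longrightarrow> (c, v) \<in> E\<^sup>* \<Longrightarrow> p v - p c \<in> K (a1 c) (a2 c) \<or> p v - p c = 0"
  using desc_K by (auto simp: rtrancl_eq_or_trancl)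

lemma edge_dot: "(x, y) \<in> E \<Longrightarrow>
   (p y - p x) \<bullet> (sg *\<^sub>R nv g) = cmod (p y - p x) * (sg * sin (slope (p x) (p y) - g))"
proof -
  assume e: "(x, y) \<in> E"
  have "(p y - p x) \<bullet> nv g = cmod (p y - p x) * sin (slope (p x) (p y) - g)"
    using edge_rep[OF e] inner_cis_nv by metis
  thus ?thesis by (simp add: inner_scaleR_right)
qed

lemma sgn_neg:
  assumes "successively (Rel E c) L" "c \<in> V"
    and "\<forall>ph. a1 c < ph \<and> ph < a2 c \<longrightarrow> sg * sin (ph - g) < 0"
  shows "successively (\<lambda>a b. (p b - p a) \<bullet> (sg *\<^sub>R nv g) < 0) L"
proof (rule successively_mono[OF assms(1)])
  fix a b assume "Rel E c a b"
  hence e: "(a, b) \<in> E" and s: "a1 c < slope (p a) (p b) \<and> slope (p a) (p b) < a2 c"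
    using edge_slope assms(2) by (auto simp: Rel_def)
  show "(p b - p a) \<bullet> (sg *\<^sub>R nv g) < 0"
    unfolding edge_dot[OF e] using assms(3) s edge_rep[OF e] by (simp add: mult_pos_neg)
qed

lemma sgn_pos:
  assumes "successively (Rel E c) L" "c \<in> V"
    and "\<forall>ph. a1 c < ph \<and> ph < a2 c \<longrightarrow> 0 < sg * sin (ph - g)"
  shows "successively (\<lambda>a b. 0 < (p b - p a) \<bullet> (sg *\<^sub>R nv g)) L"
proof (rule successively_mono[OF assms(1)])
  fix a b assume "Rel E c a b"
  hence e: "(a, b) \<in> E" and s: "a1 c < slope (p a) (p b) \<and> slope (p a) (p b) < a2 c"
    using edge_slope assms(2) by (auto simp: Rel_def)
  show "0 < (p b - p a) \<bullet> (sg *\<^sub>R nv g)"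
    unfolding edge_dot[OF e] using assms(3) s edge_rep[OF e] by simp
qed

end



context T begin

lemma path_from_root: "x \<in> V \<Longrightarrow> \<exists>L. L \<noteq> [] \<and> hd L = r \<and> last L = x \<and> successively (ep E) L"
  using reach_path[OF reach] by blast

lemma split_path:
  assumes "successively (ep E) (c0 @ P')" "c0 \<noteq> []"
  shows "successively (ep E) (last c0 # P')"
  using assms by (cases P') (auto simp: successively_append_iff)

lemma mono_pair:
  assumes xV: "x \<in> V" and yV: "y \<in> V"
  shows "\<exists>ps. is_path E ps x y \<and> monotone_path p ps"
proof -
  obtain P where P: "P \<noteq> []" "hd P = r" "last P = x" "successively (ep E) P"
    using path_from_root[OF xV] by blast
  obtain Q where Q: "Q \<noteq> []" "hd Q = r" "last Q = y" "successively (ep E) Q"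
    using path_from_root[OF yV] by blast
  obtain c0 P' Q' where c: "c0 \<noteq> []" "P = c0 @ P'" "Q = c0 @ Q'"
      "P' = [] \<or> Q' = [] \<or> hd P' \<noteq> hd Q'"
    using common_prefix[OF P(1) Q(1)] P(2) Q(2) by metis
  define w where "w = last c0"
  have sP: "successively (ep E) (w # P')" using split_path P(4) c unfolding w_def by simp
  have sQ: "successively (ep E) (w # Q')" using split_path Q(4) c unfolding w_def by simp
  have lx: "last (w # P') = x" using P(3) c(2) unfolding w_def by (cases "P' = []") auto
  have ly: "last (w # Q') = y" using Q(3) c(3) unfolding w_def by (cases "Q' = []") auto
  have "\<exists>d. d \<noteq> 0 \<and> successively (\<lambda>a b. (p b - p a) \<bullet> d < 0) (w # P') \<and>
                successively (\<lambda>a b. 0 < (p b - p a) \<bullet> d) (w # Q')"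
  proof -
    have relP: "successively (Rel E (hd P')) (w # P') \<and> hd P' \<in> V \<and> (w, hd P') \<in> E"
      if "P' \<noteq> []" using rel_path[OF sP that] sP that EV
      by (cases P') (auto simp: ep_def)
    have relQ: "successively (Rel E (hd Q')) (w # Q') \<and> hd Q' \<in> V \<and> (w, hd Q') \<in> E"
      if "Q' \<noteq> []" using rel_path[OF sQ that] sQ that EV
      by (cases Q') (auto simp: ep_def)
    show ?thesis
    proof (cases "P' = []")
      case True
      have "successively (\<lambda>a b. 0 < (p b - p a) \<bullet> (1 *\<^sub>R nv 0)) (w # Q')"
      proof (cases "Q' = []")
        case False
        show ?thesis
        proof (rule sgn_pos)
          show "successively (Rel E (hd Q')) (w # Q')" "hd Q' \<in> V" using relQ False by auto
          show "\<forall>ph. a1 (hd Q') < ph \<and> ph < a2 (hd Q') \<longrightarrow> 0 < 1 * sin (ph - 0)"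
            using A0 \<open>hd Q' \<in> V\<close> by (auto intro!: sin_gt_zero)
        qed
      qed simp
      thus ?thesis using True nv_nz by (intro exI[of _ "1 *\<^sub>R nv 0"]) auto
    next
      case Pn: False
      show ?thesis
      proof (cases "Q' = []")
        case True
        have "successively (\<lambda>a b. (p b - p a) \<bullet> (1 *\<^sub>R nv pi) < 0) (w # P')"
        proof (rule sgn_neg)
          show "successively (Rel E (hd P')) (w # P')" "hd P' \<in> V" using relP Pn by auto
          have "0 \<le> a1 (hd P')" "a2 (hd P') \<le> pi" using A0 \<open>hd P' \<in> V\<close> by auto
          thus "\<forall>ph. a1 (hd P') < ph \<and> ph < a2 (hd P') \<longrightarrow> 1 * sin (ph - pi) < 0"
            by (auto intro!: sin_gt_zero)
        qed
        thus ?thesis using True nv_nz by (intro exI[of _ "1 *\<^sub>R nv pi"]) auto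
      next
        case Qn: False
        have ne: "hd P' \<noteq> hd Q'" using c(4) Pn Qn by blast
        have RP: "successively (Rel E (hd P')) (w # P')" "hd P' \<in> V" "(w, hd P') \<in> E"
          using relP Pn by auto
        have RQ: "successively (Rel E (hd Q')) (w # Q')" "hd Q' \<in> V" "(w, hd Q') \<in> E"
          using relQ Qn by auto
        have b1: "0 \<le> a1 (hd P')" "a1 (hd P') < a2 (hd P')" "a2 (hd P') \<le> pi"
          using A0 RP(2) by auto
        have b2: "0 \<le> a1 (hd Q')" "a1 (hd Q') < a2 (hd Q')" "a2 (hd Q') \<le> pi"
          using A0 RQ(2) by auto
        from A3 RP(3) RQ(3) ne
        consider "a2 (hd P') \<le> a1 (hd Q')" | "a2 (hd Q') \<le> a1 (hd P')" by blast
        thus ?thesis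
        proof cases
          case 1
          have X: "successively (\<lambda>a b. (p b - p a) \<bullet> (1 *\<^sub>R nv (a2 (hd P'))) < 0) (w # P')"
            using RP(1,2) by (rule sgn_neg) (use b1 in \<open>auto intro!: sin_neg_lt\<close>)
          have Y: "successively (\<lambda>a b. 0 < (p b - p a) \<bullet> (1 *\<^sub>R nv (a2 (hd P')))) (w # Q')"
            using RQ(1,2) by (rule sgn_pos) (use b1 b2 1 in \<open>auto intro!: sin_gt_zero\<close>)
          show ?thesis using X Y nv_nz by (intro exI[of _ "1 *\<^sub>R nv (a2 (hd P'))"]) auto
        next
          case 2
          have X: "successively (\<lambda>a b. (p b - p a) \<bullet> ((-1) *\<^sub>R nv (a2 (hd Q'))) < 0) (w # P')"
            using RP(1,2) by (rule sgn_neg) (use b1 b2 2 in \<open>auto intro!: sin_gt_zero\<close>)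
          have Y: "successively (\<lambda>a b. 0 < (p b - p a) \<bullet> ((-1) *\<^sub>R nv (a2 (hd Q')))) (w # Q')"
            using RQ(1,2) by (rule sgn_pos) (use b2 in \<open>auto intro!: sin_neg_lt\<close>)
          show ?thesis using X Y nv_nz by (intro exI[of _ "(-1) *\<^sub>R nv (a2 (hd Q'))"]) auto
        qed
      qed
    qed
  qed
  then obtain d where d: "d \<noteq> 0" "successively (\<lambda>a b. (p b - p a) \<bullet> d < 0) (w # P')"
     "successively (\<lambda>a b. 0 < (p b - p a) \<bullet> d) (w # Q')" by blast
  define ps where "ps = rev (w # P') @ Q'"
  define R where "R = (\<lambda>a b. p a \<bullet> d < p b \<bullet> d)"
  have "successively (\<lambda>a b. R b a) (w # P')"
    using d(2) by (rule successively_mono) (auto simp: R_def inner_diff_left)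
  moreover have "successively R (w # Q')"
    using d(3) by (rule successively_mono) (auto simp: R_def inner_diff_left)
  ultimately have mono: "successively R ps" unfolding ps_def by (rule join_rev)
  define Adj where "Adj = (\<lambda>a b. (a, b) \<in> E \<or> (b, a) \<in> E)"
  have "successively (\<lambda>a b. Adj b a) (w # P')"
    using sP by (rule successively_mono) (auto simp: Adj_def ep_def)
  moreover have "successively Adj (w # Q')"
    using sQ by (rule successively_mono) (auto simp: Adj_def ep_def)
  ultimately have adj: "successively Adj ps" unfolding ps_def by (rule join_rev)
  have hdps: "hd ps = x" unfolding ps_def using lx by (cases "P' = []") (auto simp: hd_append hd_rev)
  have lastps: "last ps = y" unfolding ps_def using ly by (cases "Q' = []") (auto simp: last_rev)
  have "is_path E ps x y"
    unfolding is_path_def using hdps lastps adj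
    by (auto simp: ps_def successively_conv_nth Adj_def)
  moreover have "monotone_path p ps"
    unfolding monotone_path_def using d(1) mono by (auto simp: successively_conv_nth R_def)
  ultimately show ?thesis by blast
qed

end



context T begin

lemma sub_case:
  assumes ab: "(a, b) \<in> E" and cd: "(c, d) \<in> E" and bc: "(b, c) \<in> E\<^sup>*"
  shows "closed_segment (p a) (p b) \<inter> closed_segment (p c) (p d) \<subseteq> {p a, p b} \<inter> {p c, p d}"
proof
  fix q assume q: "q \<in> closed_segment (p a) (p b) \<inter> closed_segment (p c) (p d)"
  have bV: "b \<in> V" using EV ab by blast
  have e1: "p b - p a \<in> K (a1 b) (a2 b)" using edge_K[of b a b] ab bV by (auto simp: Rel_def)
  have e2: "p c - p b \<in> K (a1 b) (a2 b) \<or> p c - p b = 0" using desc_K0 bV bc by blast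
  have "p d - p c \<in> K (a1 b) (a2 b)" using edge_K[of b c d] cd bc bV by (auto simp: Rel_def)
  hence "(p c - p b) + (p d - p c) \<in> K (a1 b) (a2 b)" by (rule K_add0[OF e2])
  hence e3: "p d - p b \<in> K (a1 b) (a2 b)" by simp
  have "q = p b \<and> q = p c"
  proof (rule geo_main[of "uminus ` K (a1 b) (a2 b)" "K (a1 b) (a2 b)" "p b" "p b" "p a"])
    show "cone_ok (uminus ` K (a1 b) (a2 b))" by (rule cone_negK)
    show "cone_ok (K (a1 b) (a2 b))" by (rule cone_K)
    show "uminus ` K (a1 b) (a2 b) \<inter> K (a1 b) (a2 b) = {}" using K_negK_disj by blast
    show "p b - p b \<in> uminus ` K (a1 b) (a2 b) \<or> p b - p b = 0" by simp
    show "p a - p b \<in> uminus ` K (a1 b) (a2 b)" using e1 by (metis image_eqI minus_diff_eq)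
    show "p c - p b \<in> K (a1 b) (a2 b) \<or> p c - p b = 0" by (rule e2)
    show "p d - p b \<in> K (a1 b) (a2 b)" by (rule e3)
    show "q \<in> closed_segment (p b) (p a)" using q by (simp add: closed_segment_commute)
    show "q \<in> closed_segment (p c) (p d)" using q by simp
  qed
  thus "q \<in> {p a, p b} \<inter> {p c, p d}" by blast
qed

lemma planar_pair:
  assumes ab: "(a, b) \<in> E" and cd: "(c, d) \<in> E" and ne: "(a, b) \<noteq> (c, d)"
  shows "closed_segment (p a) (p b) \<inter> closed_segment (p c) (p d) \<subseteq> {p a, p b} \<inter> {p c, p d}"
proof -
  have bd: "b \<noteq> d" using uniq_parent ab cd ne by blast
  obtain Pa where Pa: "Pa \<noteq> []" "hd Pa = r" "last Pa = a" "successively (ep E) Pa"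
    using path_from_root EV ab by blast
  obtain Pc where Pc: "Pc \<noteq> []" "hd Pc = r" "last Pc = c" "successively (ep E) Pc"
    using path_from_root EV cd by blast
  define P where "P = Pa @ [b]"
  define Q where "Q = Pc @ [d]"
  have sP: "successively (ep E) P" using Pa ab by (auto simp: P_def successively_append_iff ep_def)
  have sQ: "successively (ep E) Q" using Pc cd by (auto simp: Q_def successively_append_iff ep_def)
  obtain c0 P' Q' where c: "c0 \<noteq> []" "P = c0 @ P'" "Q = c0 @ Q'"
      "P' = [] \<or> Q' = [] \<or> hd P' \<noteq> hd Q'"
    using common_prefix[of P Q] Pa Pc by (auto simp: P_def Q_def)
  define w where "w = last c0"
  show ?thesis
  proof (cases "P' = []")
    case True
    have Qn: "Q' \<noteq> []" using True c bd by (auto simp: P_def Q_def)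
    have "Pc = butlast Q" by (simp add: Q_def)
    also have "\<dots> = c0 @ butlast Q'" using c(3) Qn by (simp add: butlast_append)
    finally have "b \<in> set Pc" using c(1,2) True by (auto simp: P_def)
    hence "(b, c) \<in> E\<^sup>*" using path_reach_last[OF Pc(4) Pc(1)] Pc(3) by simp
    thus ?thesis using sub_case ab cd by blast
  next
    case Pn: False
    show ?thesis
    proof (cases "Q' = []")
      case True
      have "Pa = butlast P" by (simp add: P_def)
      also have "\<dots> = c0 @ butlast P'" using c(2) Pn by (simp add: butlast_append)
      finally have "d \<in> set Pa" using c(1,3) True by (auto simp: Q_def)
      hence "(d, a) \<in> E\<^sup>*" using path_reach_last[OF Pa(4) Pa(1)] Pa(3) by simp
      thus ?thesis using sub_case[OF cd ab] by blast
    next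
      case Qn: False
      have ne2: "hd P' \<noteq> hd Q'" using c(4) Pn Qn by blast
      have sP': "successively (ep E) (w # P')" using split_path sP c unfolding w_def by simp
      have sQ': "successively (ep E) (w # Q')" using split_path sQ c unfolding w_def by simp
      have wP: "(w, hd P') \<in> E" using sP' Pn by (cases P') (auto simp: ep_def)
      have wQ: "(w, hd Q') \<in> E" using sQ' Qn by (cases Q') (auto simp: ep_def)
      have wV: "w \<in> V" and c1V: "hd P' \<in> V" and c2V: "hd Q' \<in> V" using EV wP wQ by auto
      have inK: "p v - p w \<in> K (a1 (hd L)) (a2 (hd L))"
        if L: "successively (ep E) (w # L)" "L \<noteq> []" "v \<in> set L" "hd L \<in> V" for L v
      proof -
        have sL: "successively (ep E) L" using L(1) by (cases L) auto
        have "(hd L, v) \<in> E\<^sup>*" using path_reach[OF sL L(2,3)] .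
        hence 1: "p v - p (hd L) \<in> K (a1 (hd L)) (a2 (hd L)) \<or> p v - p (hd L) = 0"
          using desc_K0 L(4) by blast
        have "(w, hd L) \<in> E" using L(1,2) by (cases L) (auto simp: ep_def)
        hence "p (hd L) - p w \<in> K (a1 (hd L)) (a2 (hd L))"
          using edge_K[of "hd L" w "hd L"] L(4) by (auto simp: Rel_def)
        from K_add0[OF 1 this] show ?thesis by simp
      qed
      have lastP: "last P' = b" using c(2) Pn by (simp add: P_def) (metis last_appendR last_snoc)
      have lastQ: "last Q' = d" using c(3) Qn by (simp add: Q_def) (metis last_appendR last_snoc)
      have bK: "p b - p w \<in> K (a1 (hd P')) (a2 (hd P'))"
        using inK[OF sP' Pn _ c1V] lastP Pn by (metis last_in_set)
      have dK: "p d - p w \<in> K (a1 (hd Q')) (a2 (hd Q'))"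
        using inK[OF sQ' Qn _ c2V] lastQ Qn by (metis last_in_set)
      have aK: "p a - p w \<in> K (a1 (hd P')) (a2 (hd P')) \<or> p a - p w = 0"
      proof -
        have "Pa = butlast P" by (simp add: P_def)
        also have "\<dots> = c0 @ butlast P'" using c(2) Pn by (simp add: butlast_append)
        finally have Pa': "Pa = c0 @ butlast P'" .
        show ?thesis
        proof (cases "butlast P' = []")
          case True
          hence "a = w" using Pa' Pa(3) unfolding w_def by simp
          thus ?thesis by simp
        next
          case False
          hence "a = last (butlast P')" using Pa' Pa(3) by simp
          hence "a \<in> set P'" using False by (metis in_set_butlastD last_in_set)
          thus ?thesis using inK[OF sP' Pn _ c1V] by blast
        qed
      qed
      have cK: "p c - p w \<in> K (a1 (hd Q')) (a2 (hd Q')) \<or> p c - p w = 0"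
      proof -
        have "Pc = butlast Q" by (simp add: Q_def)
        also have "\<dots> = c0 @ butlast Q'" using c(3) Qn by (simp add: butlast_append)
        finally have Pc': "Pc = c0 @ butlast Q'" .
        show ?thesis
        proof (cases "butlast Q' = []")
          case True
          hence "c = w" using Pc' Pc(3) unfolding w_def by simp
          thus ?thesis by simp
        next
          case False
          hence "c = last (butlast Q')" using Pc' Pc(3) by simp
          hence "c \<in> set Q'" using False by (metis in_set_butlastD last_in_set)
          thus ?thesis using inK[OF sQ' Qn _ c2V] by blast
        qed
      qed
      have disj: "K (a1 (hd P')) (a2 (hd P')) \<inter> K (a1 (hd Q')) (a2 (hd Q')) = {}"
      proof -
        have b1: "0 \<le> a1 (hd P')" "a1 (hd P') < a2 (hd P')" "a2 (hd P') \<le> pi"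
          using A0 c1V by auto
        have b2: "0 \<le> a1 (hd Q')" "a1 (hd Q') < a2 (hd Q')" "a2 (hd Q') \<le> pi"
          using A0 c2V by auto
        from A3 wP wQ ne2
        consider "a2 (hd P') \<le> a1 (hd Q')" | "a2 (hd Q') \<le> a1 (hd P')" by blast
        thus ?thesis
        proof cases
          case 1
          have "0 \<le> a2 (hd P')" "a1 (hd Q') \<le> pi" using b1 b2 by linarith+
          thus ?thesis using K_disj[OF _ _ 1] by blast
        next
          case 2
          have "0 \<le> a2 (hd Q')" "a1 (hd P') \<le> pi" using b1 b2 by linarith+
          thus ?thesis using K_disj[OF _ _ 2] by blast
        qed
      qed
      show ?thesis
      proof
        fix q assume q: "q \<in> closed_segment (p a) (p b) \<inter> closed_segment (p c) (p d)"
        have "q = p a \<and> q = p c"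
          using geo_main[OF cone_K cone_K disj aK bK cK dK] q by blast
        thus "q \<in> {p a, p b} \<inter> {p c, p d}" by blast
      qed
    qed
  qed
qed

end


theorem theorem3:
  fixes V :: "'v set" and E :: "('v \<times> 'v) set" and r :: 'v and p :: "'v \<Rightarrow> complex"
  assumes "rooted_tree V E r"
    and "straight_line_drawing V p"
    and "nonstrictly_slope_disjoint V E r p"
  shows "monotone_drawing V E p \<and> planar_drawing E p"
proof -
  obtain a1 a2 :: "'v \<Rightarrow> real" where
    H0: "\<forall>u\<in>V. 0 \<le> a1 u \<and> a1 u < a2 u \<and> a2 u \<le> pi" and
    H1: "\<forall>u\<in>V. \<forall>x y. (x, y) \<in> E \<and> ((u, x) \<in> E\<^sup>* \<or> y = u) \<longrightarrow>
              a1 u < slope (p x) (p y) \<and> slope (p x) (p y) < a2 u" and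
    H3: "\<forall>u v1 v2. (u, v1) \<in> E \<and> (u, v2) \<in> E \<and> v1 \<noteq> v2 \<longrightarrow>
              (a1 v1 < a2 v1 \<and> a2 v1 \<le> a1 v2 \<and> a1 v2 < a2 v2) \<or>
              (a1 v2 < a2 v2 \<and> a2 v2 \<le> a1 v1 \<and> a1 v1 < a2 v1)"
  proof -
    from assms(3) obtain a1 a2 :: "'v \<Rightarrow> real" where
      HH: "(\<forall>u\<in>V. 0 \<le> a1 u \<and> a1 u < a2 u \<and> a2 u \<le> pi) \<and>
        (\<forall>u\<in>V. \<forall>x y. (x, y) \<in> E \<and> ((u, x) \<in> E\<^sup>* \<or> y = u) \<longrightarrow>
              a1 u < slope (p x) (p y) \<and> slope (p x) (p y) < a2 u) \<and>
        (\<forall>u v. (u, v) \<in> E \<longrightarrow> a1 u \<le> a1 v \<and> a1 v < a2 v \<and> a2 v \<le> a2 u) \<and>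
        (\<forall>u v1 v2. (u, v1) \<in> E \<and> (u, v2) \<in> E \<and> v1 \<noteq> v2 \<longrightarrow>
              (a1 v1 < a2 v1 \<and> a2 v1 \<le> a1 v2 \<and> a1 v2 < a2 v2) \<or>
              (a1 v2 < a2 v2 \<and> a2 v2 \<le> a1 v1 \<and> a1 v1 < a2 v1))"
      unfolding nonstrictly_slope_disjoint_def by (elim exE)
    show ?thesis using that HH by (elim conjE)
  qed
  interpret T V E r p a1 a2
    using assms(1,2) H0 H1 H3 by unfold_locales (auto simp: straight_line_drawing_def)
  show ?thesis unfolding monotone_drawing_def planar_drawing_def
    using mono_pair planar_pair by blast
qed

end
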